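(* Let $P=\{x\in\mathbb{R}^n: Ax\ge b\}$ with rational data be full-dimensional and pointed, let $\mathcal{I}\subseteq\{1,\dots,n\}$ and $P_I=\{x\in P: x_j\in\mathbb{Z}\text{ for all } j\in\mathcal{I}\}$. Let $\mathcal{P},\mathcal{R}\subset\mathbb{R}^n$ be finite sets of points and rays. Then the point-ray collection $(\mathcal{P},\mathcal{R})$ is proper if and only if $P_I\subseteq \operatorname{conv}(\mathcal{P})+\operatorname{cone}(\mathcal{R})$.
   Context: The point-ray linear program (PRLP) for $(\mathcal{P},\mathcal{R})$ has feasible region $\{(\alpha,\beta)\in\mathbb{R}^n\times\mathbb{R}: \alpha^\top p\ge\beta\ \forall p\in\mathcal{P},\ \alpha^\top r\ge 0\ \forall r\in\mathcal{R}\}$. The collection $(\mathcal{P},\mathcal{R})$ is called proper if $\alpha^\top x\ge\beta$ is a valid inequality for $P_I$ whenever $(\alpha,\beta)$ is feasible for the PRLP. *)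

theory Defs
  imports "HOL-Analysis.Analysis"
begin

definition ineq_polyhedron :: "real^'n^'m \<Rightarrow> real^'m \<Rightarrow> (real^'n) set" where
  "ineq_polyhedron A b = {x. \<forall>i. (A *v x) $ i \<ge> b $ i}"

definition mixed_int_set :: "real^'n^'m \<Rightarrow> real^'m \<Rightarrow> 'n set \<Rightarrow> (real^'n) set" where
  "mixed_int_set A b I = {x \<in> ineq_polyhedron A b. \<forall>j\<in>I. x $ j \<in> \<int>}"

definition full_dimensional :: "(real^'n) set \<Rightarrow> bool" where
  "full_dimensional S \<longleftrightarrow> aff_dim S = int CARD('n)"

definition pointed :: "(real^'n) set \<Rightarrow> bool" where
  "pointed S \<longleftrightarrow> \<not> (\<exists>x d. d \<noteq> 0 \<and> (\<forall>t::real. x + t *\<^sub>R d \<in> S))"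

definition prlp_feasible :: "(real^'n) set \<Rightarrow> (real^'n) set \<Rightarrow> real^'n \<Rightarrow> real \<Rightarrow> bool" where
  "prlp_feasible Ps Rs \<alpha> \<beta> \<longleftrightarrow> (\<forall>p\<in>Ps. \<alpha> \<bullet> p \<ge> \<beta>) \<and> (\<forall>r\<in>Rs. \<alpha> \<bullet> r \<ge> 0)"

definition valid_ineq :: "(real^'n) set \<Rightarrow> real^'n \<Rightarrow> real \<Rightarrow> bool" where
  "valid_ineq S \<alpha> \<beta> \<longleftrightarrow> (\<forall>x\<in>S. \<alpha> \<bullet> x \<ge> \<beta>)"

definition proper_collection :: "(real^'n) set \<Rightarrow> (real^'n) set \<Rightarrow> (real^'n) set \<Rightarrow> bool" where
  "proper_collection PI Ps Rs \<longleftrightarrow> (\<forall>\<alpha> \<beta>. prlp_feasible Ps Rs \<alpha> \<beta> \<longrightarrow> valid_ineq PI \<alpha> \<beta>)"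

text \<open>conv(Ps) + cone(Rs); cone(Rs) is the convex conic hull (cone of empty set = {0}).\<close>
definition conv_plus_cone :: "(real^'n) set \<Rightarrow> (real^'n) set \<Rightarrow> (real^'n) set" where
  "conv_plus_cone Ps Rs = {p + r | p r. p \<in> convex hull Ps \<and> r \<in> convex_cone hull Rs}"

end

theory Submission
  imports Defs
begin

lemma cone_half: "convex_cone {x::real^'n. 0 \<le> a \<bullet> x}"
  by (rule convex_cone_halfspace_ge)

lemma conv_sub: "convex hull Ps \<subseteq> {x::real^'n. \<beta> \<le> a \<bullet> x}"
  if "\<forall>p\<in>Ps. a \<bullet> p \<ge> \<beta>"
  using that by (intro hull_minimal) (auto simp: convex_halfspace_ge)

lemma cone_sub: "convex_cone hull Rs \<subseteq> {x::real^'n. 0 \<le> a \<bullet> x}"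
  if "\<forall>r\<in>Rs. a \<bullet> r \<ge> 0"
  using that cone_half by (intro hull_minimal) auto

theorem corollary1:
  fixes A :: "real^'n^'m" and b :: "real^'m" and I :: "'n set"
    and Ps Rs :: "(real^'n) set"
  assumes "\<forall>i j. A $ i $ j \<in> \<rat>" and "\<forall>i. b $ i \<in> \<rat>"
    and "full_dimensional (ineq_polyhedron A b)" and "pointed (ineq_polyhedron A b)"
    and "finite Ps" and "finite Rs"
  shows "proper_collection (mixed_int_set A b I) Ps Rs \<longleftrightarrow>
         mixed_int_set A b I \<subseteq> conv_plus_cone Ps Rs"
proof
  assume sub: "mixed_int_set A b I \<subseteq> conv_plus_cone Ps Rs"
  show "proper_collection (mixed_int_set A b I) Ps Rs"
    unfolding proper_collection_def valid_ineq_def prlp_feasible_def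
  proof (intro allI impI ballI)
    fix \<alpha> \<beta> x assume f: "(\<forall>p\<in>Ps. \<beta> \<le> \<alpha> \<bullet> p) \<and> (\<forall>r\<in>Rs. 0 \<le> \<alpha> \<bullet> r)"
      and x: "x \<in> mixed_int_set A b I"
    then obtain p r where "x = p + r" "p \<in> convex hull Ps" "r \<in> convex_cone hull Rs"
      using sub unfolding conv_plus_cone_def by blast
    moreover have "\<beta> \<le> \<alpha> \<bullet> p" using conv_sub[where a=\<alpha> and \<beta>=\<beta> and Ps=Ps] f \<open>p \<in> convex hull Ps\<close> by auto
    moreover have "0 \<le> \<alpha> \<bullet> r" using cone_sub[where a=\<alpha> and Rs=Rs] f \<open>r \<in> convex_cone hull Rs\<close> by auto
    ultimately show "\<beta> \<le> \<alpha> \<bullet> x" by (simp add: inner_add_right)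
  qed
next
  assume pr: "proper_collection (mixed_int_set A b I) Ps Rs"
  show "mixed_int_set A b I \<subseteq> conv_plus_cone Ps Rs"
  proof (cases "Ps = {}")
    case True
    have "prlp_feasible Ps Rs 0 1" using True by (simp add: prlp_feasible_def)
    with pr have "valid_ineq (mixed_int_set A b I) 0 1" by (simp add: proper_collection_def)
    then have "mixed_int_set A b I = {}" by (auto simp: valid_ineq_def)
    then show ?thesis by simp
  next
    case False
    then obtain p0 where p0: "p0 \<in> Ps" by blast
    have Qeq: "conv_plus_cone Ps Rs = (\<Union>x\<in> convex hull Ps. \<Union>y \<in> convex_cone hull Rs. {x + y})"
      unfolding conv_plus_cone_def by blast
    have cl: "closed (conv_plus_cone Ps Rs)" unfolding Qeq
      by (intro compact_closed_sums compact_convex_hull closed_convex_cone_hull finite_imp_compact assms)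
    have cv: "convex (conv_plus_cone Ps Rs)" unfolding Qeq
      by (intro convex_sums convex_convex_hull convex_convex_cone_hull)
    show ?thesis
    proof
      fix x assume x: "x \<in> mixed_int_set A b I"
      show "x \<in> conv_plus_cone Ps Rs"
      proof (rule ccontr)
        assume "x \<notin> conv_plus_cone Ps Rs"
        then obtain a c where ac: "a \<bullet> x < c" "\<forall>q\<in>conv_plus_cone Ps Rs. a \<bullet> q > c"
          using separating_hyperplane_closed_point[OF cv cl] by blast
        have mem: "p + r \<in> conv_plus_cone Ps Rs" if "p \<in> convex hull Ps" "r \<in> convex_cone hull Rs" for p r
          using that unfolding conv_plus_cone_def by blast
        have P: "\<forall>p\<in>Ps. c \<le> a \<bullet> p"
        proof
          fix p assume "p \<in> Ps"
          then have "p + 0 \<in> conv_plus_cone Ps Rs"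
            by (intro mem hull_inc convex_cone_hull_contains_0)
          then show "c \<le> a \<bullet> p" using ac by force
        qed
        have R: "\<forall>r\<in>Rs. 0 \<le> a \<bullet> r"
        proof (rule ballI, rule ccontr)
          fix r assume r: "r \<in> Rs" and neg: "\<not> 0 \<le> a \<bullet> r"
          define t where "t = (a \<bullet> p0 - c) / (- (a \<bullet> r))"
          have gt: "a \<bullet> p0 > c" using P p0 ac mem[of p0 0] hull_inc[OF p0] convex_cone_hull_contains_0 by force
          have t0: "t \<ge> 0" unfolding t_def using gt neg by (intro divide_nonneg_pos) auto
          have "p0 + t *\<^sub>R r \<in> conv_plus_cone Ps Rs"
            by (intro mem hull_inc p0 convex_cone_hull_mul t0 r)
          then have "a \<bullet> (p0 + t *\<^sub>R r) > c" using ac by blast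
          moreover have "a \<bullet> (p0 + t *\<^sub>R r) = c" unfolding t_def using neg
            by (simp add: inner_add_right inner_diff_right)
          ultimately show False by simp
        qed
        have "prlp_feasible Ps Rs a c" using P R by (simp add: prlp_feasible_def)
        with pr have "valid_ineq (mixed_int_set A b I) a c" by (simp add: proper_collection_def)
        with x ac show False by (force simp: valid_ineq_def)
      qed
    qed
  qed
qed

end
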